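(* Let $G$ be a topological group, $\xi=(E\xrightarrow{p}X)$ a numerable principal $G$-bundle over a pointed space $(X,* )$, pointed by $\tilde*\in p^{-1}( * )$, with gauge group $\mathcal G$, and let $\mathrm{res}:\mathcal G\to G$ be the homomorphism defined by $\chi(\tilde* )=\tilde*\cdot\mathrm{res}(\chi)$. If $G$ is SIN, then $\mathrm{res}$ is uniformly continuous. If $G$ is path-connected, then $\mathrm{res}$ is surjective.
   Context: SIN: the identity has a fundamental system of conjugation-invariant neighbourhoods. The gauge group $\mathcal G$ is the group of $G$-equivariant homeomorphisms $\chi:E\to E$ with $p\chi=p$. Let $\gamma:E\times_XE\to G$ be defined by $y=z\cdot\gamma(y,z)$; $\mathcal V_G$ is the set of open symmetric neighbourhoods of the identity in $G$. $\mathcal G$ carries the uniform structure with fundamental entourages $\mathcal O^{\mathcal G}(K,V)=\{(\chi,\tilde\chi):\gamma(\chi(z),\tilde\chi(z))\in V\ \forall z\in p^{-1}(K)\}$, $K\subset X$ compact, $V\in\mathcal V_G$. $G$ carries the uniform structure with entourages $\{(\tilde g,g):\tilde gg^{-1}\in V\}$, $V\in\mathcal V_G$. *)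

theory Defs
  imports "HOL-Analysis.Analysis" "HOL-Algebra.Group"
begin

definition topological_group :: "('g, 'm) monoid_scheme \<Rightarrow> 'g topology \<Rightarrow> bool" where
  "topological_group G TG \<longleftrightarrow>
     group G \<and> topspace TG = carrier G \<and>
     continuous_map (prod_topology TG TG) TG (\<lambda>(a, b). a \<otimes>\<^bsub>G\<^esub> b) \<and>
     continuous_map TG TG (\<lambda>a. inv\<^bsub>G\<^esub> a)"

definition sym_nhds_one :: "('g, 'm) monoid_scheme \<Rightarrow> 'g topology \<Rightarrow> 'g set set" where
  "sym_nhds_one G TG =
     {V. openin TG V \<and> \<one>\<^bsub>G\<^esub> \<in> V \<and> (\<forall>v\<in>V. inv\<^bsub>G\<^esub> v \<in> V)}"

definition SIN :: "('g, 'm) monoid_scheme \<Rightarrow> 'g topology \<Rightarrow> bool" where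
  "SIN G TG \<longleftrightarrow>
     (\<forall>U. openin TG U \<and> \<one>\<^bsub>G\<^esub> \<in> U \<longrightarrow>
        (\<exists>V. V \<subseteq> U \<and> (\<exists>W. openin TG W \<and> \<one>\<^bsub>G\<^esub> \<in> W \<and> W \<subseteq> V) \<and>
             (\<forall>g\<in>carrier G. \<forall>v\<in>V. g \<otimes>\<^bsub>G\<^esub> v \<otimes>\<^bsub>G\<^esub> inv\<^bsub>G\<^esub> g \<in> V)))"

definition group_entourage :: "('g, 'm) monoid_scheme \<Rightarrow> 'g set \<Rightarrow> ('g \<times> 'g) set" where
  "group_entourage G V =
     {(h, g). h \<in> carrier G \<and> g \<in> carrier G \<and> h \<otimes>\<^bsub>G\<^esub> inv\<^bsub>G\<^esub> g \<in> V}"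

definition local_trivialization ::
  "('g, 'm) monoid_scheme \<Rightarrow> 'g topology \<Rightarrow> 'e topology \<Rightarrow> 'x topology \<Rightarrow>
   ('e \<Rightarrow> 'x) \<Rightarrow> ('e \<Rightarrow> 'g \<Rightarrow> 'e) \<Rightarrow> 'x set \<Rightarrow> ('e \<Rightarrow> 'x \<times> 'g) \<Rightarrow> bool" where
  "local_trivialization G TG E X p act U \<phi> \<longleftrightarrow>
     openin X U \<and>
     homeomorphic_map (subtopology E {e \<in> topspace E. p e \<in> U})
                      (prod_topology (subtopology X U) TG) \<phi> \<and>
     (\<forall>e\<in>topspace E. p e \<in> U \<longrightarrow> fst (\<phi> e) = p e) \<and>
     (\<forall>e\<in>topspace E. \<forall>g\<in>carrier G. p e \<in> U \<longrightarrow>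
        \<phi> (act e g) = (p e, snd (\<phi> e) \<otimes>\<^bsub>G\<^esub> g))"

text \<open>A numerable principal G-bundle p : E \<rightarrow> X with right action act, where the
  numerability is witnessed by the locally finite partition of unity (u j) for j in J
  whose positivity sets u j^{-1}(0,1] are trivialising.\<close>
definition numerable_principal_bundle ::
  "('g, 'm) monoid_scheme \<Rightarrow> 'g topology \<Rightarrow> 'e topology \<Rightarrow> 'x topology \<Rightarrow>
   ('e \<Rightarrow> 'x) \<Rightarrow> ('e \<Rightarrow> 'g \<Rightarrow> 'e) \<Rightarrow> 'j set \<Rightarrow> ('j \<Rightarrow> 'x \<Rightarrow> real) \<Rightarrow> bool" where
  "numerable_principal_bundle G TG E X p act J u \<longleftrightarrow>
     topological_group G TG \<and>
     continuous_map E X p \<and>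
     continuous_map (prod_topology E TG) E (\<lambda>(e, g). act e g) \<and>
     (\<forall>e\<in>topspace E. act e \<one>\<^bsub>G\<^esub> = e) \<and>
     (\<forall>e\<in>topspace E. \<forall>g\<in>carrier G. \<forall>h\<in>carrier G.
        act (act e g) h = act e (g \<otimes>\<^bsub>G\<^esub> h)) \<and>
     (\<forall>e\<in>topspace E. \<forall>g\<in>carrier G. p (act e g) = p e) \<and>
     \<comment> \<open>partition of unity\<close>
     (\<forall>j\<in>J. continuous_map X euclideanreal (u j) \<and>
              (\<forall>x\<in>topspace X. 0 \<le> u j x \<and> u j x \<le> 1)) \<and>
     (\<forall>x\<in>topspace X. \<exists>N. openin X N \<and> x \<in> N \<and>
              finite {j\<in>J. \<exists>y\<in>N. u j y \<noteq> 0}) \<and>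
     (\<forall>x\<in>topspace X. (\<Sum>j\<in>{j\<in>J. u j x \<noteq> 0}. u j x) = 1) \<and>
     \<comment> \<open>subordinate to a trivialising cover\<close>
     (\<forall>j\<in>J. \<exists>\<phi>. local_trivialization G TG E X p act {x\<in>topspace X. u j x > 0} \<phi>)"

definition bundle_gamma :: "('g, 'm) monoid_scheme \<Rightarrow> ('e \<Rightarrow> 'g \<Rightarrow> 'e) \<Rightarrow> 'e \<Rightarrow> 'e \<Rightarrow> 'g" where
  "bundle_gamma G act y z = (THE g. g \<in> carrier G \<and> y = act z g)"

definition gauge_group ::
  "('g, 'm) monoid_scheme \<Rightarrow> 'e topology \<Rightarrow> ('e \<Rightarrow> 'x) \<Rightarrow> ('e \<Rightarrow> 'g \<Rightarrow> 'e) \<Rightarrow> ('e \<Rightarrow> 'e) set" where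
  "gauge_group G E p act =
     {f. homeomorphic_map E E f \<and>
          (\<forall>e\<in>topspace E. \<forall>g\<in>carrier G. f (act e g) = act (f e) g) \<and>
          (\<forall>e\<in>topspace E. p (f e) = p e)}"

definition gauge_entourage ::
  "('g, 'm) monoid_scheme \<Rightarrow> 'e topology \<Rightarrow> ('e \<Rightarrow> 'x) \<Rightarrow> ('e \<Rightarrow> 'g \<Rightarrow> 'e) \<Rightarrow>
   'x set \<Rightarrow> 'g set \<Rightarrow> (('e \<Rightarrow> 'e) \<times> ('e \<Rightarrow> 'e)) set" where
  "gauge_entourage G E p act K V =
     {(f, h). f \<in> gauge_group G E p act \<and> h \<in> gauge_group G E p act \<and>
        (\<forall>z\<in>topspace E. p z \<in> K \<longrightarrow> bundle_gamma G act (f z) (h z) \<in> V)}"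

definition gauge_res :: "('g, 'm) monoid_scheme \<Rightarrow> ('e \<Rightarrow> 'g \<Rightarrow> 'e) \<Rightarrow> 'e \<Rightarrow> ('e \<Rightarrow> 'e) \<Rightarrow> 'g" where
  "gauge_res G act e0 f = bundle_gamma G act (f e0) e0"

text \<open>Uniform continuity of res with respect to the uniform structures generated by the
  fundamental entourages (both families are filter bases).\<close>
definition gauge_res_uniformly_continuous ::
  "('g, 'm) monoid_scheme \<Rightarrow> 'g topology \<Rightarrow> 'e topology \<Rightarrow> 'x topology \<Rightarrow>
   ('e \<Rightarrow> 'x) \<Rightarrow> ('e \<Rightarrow> 'g \<Rightarrow> 'e) \<Rightarrow> 'e \<Rightarrow> bool" where
  "gauge_res_uniformly_continuous G TG E X p act e0 \<longleftrightarrow>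
     (\<forall>V\<in>sym_nhds_one G TG. \<exists>K W. compactin X K \<and> W \<in> sym_nhds_one G TG \<and>
        gauge_entourage G E p act K W \<subseteq>
          {(f, h). (gauge_res G act e0 f, gauge_res G act e0 h) \<in> group_entourage G V})"

end

theory Submission
  imports Defs
begin

lemma tg_mult_cont:
  assumes "topological_group G TG" "continuous_map Z TG f" "continuous_map Z TG g"
  shows "continuous_map Z TG (\<lambda>x. f x \<otimes>\<^bsub>G\<^esub> g x)"
proof -
  have "continuous_map Z (prod_topology TG TG) (\<lambda>x. (f x, g x))"
    using assms by (simp add: continuous_map_paired)
  moreover have "continuous_map (prod_topology TG TG) TG (\<lambda>(a, b). a \<otimes>\<^bsub>G\<^esub> b)"
    using assms(1) by (simp add: topological_group_def)
  ultimately show ?thesis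
    using continuous_map_compose[of Z _ "\<lambda>x. (f x, g x)" TG "\<lambda>(a, b). a \<otimes>\<^bsub>G\<^esub> b"]
    by (simp add: o_def)
qed

lemma tg_inv_cont:
  assumes "topological_group G TG" "continuous_map Z TG f"
  shows "continuous_map Z TG (\<lambda>x. inv\<^bsub>G\<^esub> (f x))"
proof -
  have "continuous_map TG TG (\<lambda>a. inv\<^bsub>G\<^esub> a)"
    using assms(1) by (simp add: topological_group_def)
  then show ?thesis
    using continuous_map_compose[OF assms(2)] by (simp add: o_def)
qed

theorem proposition3p2:
  fixes G :: "('g, 'm) monoid_scheme" and TG :: "'g topology"
    and E :: "'e topology" and X :: "'x topology"
    and p :: "'e \<Rightarrow> 'x" and act :: "'e \<Rightarrow> 'g \<Rightarrow> 'e"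
    and J :: "'j set" and u :: "'j \<Rightarrow> 'x \<Rightarrow> real"
    and x0 :: 'x and e0 :: 'e
  assumes pb: "numerable_principal_bundle G TG E X p act J u"
    and base: "x0 \<in> topspace X"
    and pt: "e0 \<in> topspace E" "p e0 = x0"
  shows "(SIN G TG \<longrightarrow> gauge_res_uniformly_continuous G TG E X p act e0) \<and>
         (path_connected_space TG \<longrightarrow>
            (\<forall>g\<in>carrier G. \<exists>f\<in>gauge_group G E p act. gauge_res G act e0 f = g))"
proof -
  have tg: "topological_group G TG" and pc: "continuous_map E X p"
   and ac: "continuous_map (prod_topology E TG) E (\<lambda>(e, g). act e g)"
   and a1: "\<And>e. e \<in> topspace E \<Longrightarrow> act e \<one>\<^bsub>G\<^esub> = e"
   and a2: "\<And>e g h. e \<in> topspace E \<Longrightarrow> g \<in> carrier G \<Longrightarrow> h \<in> carrier G \<Longrightarrow> act (act e g) h = act e (g \<otimes>\<^bsub>G\<^esub> h)"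
   and a3: "\<And>e g. e \<in> topspace E \<Longrightarrow> g \<in> carrier G \<Longrightarrow> p (act e g) = p e"
   and uc: "\<And>j. j \<in> J \<Longrightarrow> continuous_map X euclideanreal (u j)"
   and u01: "\<And>j x. j \<in> J \<Longrightarrow> x \<in> topspace X \<Longrightarrow> 0 \<le> u j x"
   and usum: "\<And>x. x \<in> topspace X \<Longrightarrow> (\<Sum>j\<in>{j\<in>J. u j x \<noteq> 0}. u j x) = 1"
   and triv: "\<And>j. j \<in> J \<Longrightarrow> \<exists>\<phi>. local_trivialization G TG E X p act {x\<in>topspace X. u j x > 0} \<phi>"
    using pb unfolding numerable_principal_bundle_def by auto
  interpret G: group G using tg unfolding topological_group_def by auto
  have tsG: "topspace TG = carrier G" using tg unfolding topological_group_def by auto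
  have actin: "act e g \<in> topspace E" if "e \<in> topspace E" "g \<in> carrier G" for e g
  proof -
    have "(e,g) \<in> topspace (prod_topology E TG)" using tsG that by simp
    then show ?thesis using continuous_map_image_subset_topspace[OF ac] by force
  qed
  obtain j where j: "j \<in> J" "u j x0 > 0"
  proof -
    have "{j\<in>J. u j x0 \<noteq> 0} \<noteq> {}"
    proof
      assume "{j\<in>J. u j x0 \<noteq> 0} = {}"
      then have "(\<Sum>j\<in>{j\<in>J. u j x0 \<noteq> 0}. u j x0) = 0" by simp
      then show False using usum[OF base] by simp
    qed
    then obtain j where "j \<in> J" "u j x0 \<noteq> 0" by auto
    with u01[OF this(1) base] that show thesis by force
  qed
  define U where "U = {x\<in>topspace X. u j x > 0}"
  obtain \<phi> where phi: "local_trivialization G TG E X p act U \<phi>" using triv j U_def by auto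
  have Uo: "openin X U"
   and hm: "homeomorphic_map (subtopology E {e \<in> topspace E. p e \<in> U}) (prod_topology (subtopology X U) TG) \<phi>"
   and pf: "\<And>e. e \<in> topspace E \<Longrightarrow> p e \<in> U \<Longrightarrow> fst (\<phi> e) = p e"
   and peq: "\<And>e g. e\<in>topspace E \<Longrightarrow> g\<in>carrier G \<Longrightarrow> p e \<in> U \<Longrightarrow> \<phi> (act e g) = (p e, snd (\<phi> e) \<otimes>\<^bsub>G\<^esub> g)"
    using phi unfolding local_trivialization_def by auto
  define S where "S = {e \<in> topspace E. p e \<in> U}"
  have topS: "topspace (subtopology E S) = S" by (auto simp: S_def topspace_subtopology)
  have phic: "continuous_map (subtopology E S) (prod_topology (subtopology X U) TG) \<phi>"
    using hm homeomorphic_imp_continuous_map S_def by blast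
  have phiinj: "inj_on \<phi> S" using homeomorphic_imp_injective_map[OF hm] topS S_def by simp
  have sndc: "snd (\<phi> e) \<in> carrier G" if "e \<in> S" for e
    using continuous_map_image_subset_topspace[OF phic] topS tsG that by force
  have free: "g = h" if "e \<in> S" "g \<in> carrier G" "h \<in> carrier G" "act e g = act e h" for e g h
  proof -
    have "\<phi> (act e g) = \<phi> (act e h)" using that by simp
    moreover have "\<phi> (act e g) = (p e, snd (\<phi> e) \<otimes>\<^bsub>G\<^esub> g)" "\<phi> (act e h) = (p e, snd (\<phi> e) \<otimes>\<^bsub>G\<^esub> h)"
      using peq[of e g] peq[of e h] that unfolding S_def by simp_all
    ultimately have "snd (\<phi> e) \<otimes>\<^bsub>G\<^esub> g = snd (\<phi> e) \<otimes>\<^bsub>G\<^esub> h" by simp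
    then show "g = h" using sndc that by simp
  qed
  have gam: "bundle_gamma G act (act e g) e = g" if "e \<in> S" "g \<in> carrier G" for e g
    unfolding bundle_gamma_def using that by (intro the_equality) (auto dest: free)
  have trans: "\<exists>g\<in>carrier G. e' = act e g" if e: "e \<in> S" and e': "e' \<in> topspace E" "p e' = p e" for e e'
  proof -
    have e'S: "e' \<in> S" using e e' S_def by auto
    define g where "g = inv\<^bsub>G\<^esub> (snd (\<phi> e)) \<otimes>\<^bsub>G\<^esub> snd (\<phi> e')"
    have g: "g \<in> carrier G" using sndc e e'S g_def by simp
    have "act e g \<in> S" using actin g e a3 S_def by auto
    moreover have "\<phi> (act e g) = \<phi> e'"
    proof -
      have "\<phi> (act e g) = (p e, snd (\<phi> e) \<otimes>\<^bsub>G\<^esub> g)" using peq e g S_def by auto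
      also have "snd (\<phi> e) \<otimes>\<^bsub>G\<^esub> g = snd (\<phi> e')" using g_def sndc e e'S by (simp add: G.m_assoc[symmetric])
      also have "(p e, snd (\<phi> e')) = \<phi> e'" 
      proof -
        have "fst (\<phi> e') = p e" using pf[of e'] e' e'S unfolding S_def by simp
        then show ?thesis by (simp add: prod_eq_iff)
      qed
      finally show ?thesis .
    qed
    ultimately have "act e g = e'" using phiinj e'S by (meson inj_onD)
    then show ?thesis using g by auto
  qed
  have e0S: "e0 \<in> S" using pt base j S_def U_def by auto
  have part1: "SIN G TG \<longrightarrow> gauge_res_uniformly_continuous G TG E X p act e0"
  proof
    assume sin: "SIN G TG"
    show "gauge_res_uniformly_continuous G TG E X p act e0"
      unfolding gauge_res_uniformly_continuous_def
    proof
      fix V assume V: "V \<in> sym_nhds_one G TG"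
      then have "openin TG V" "\<one>\<^bsub>G\<^esub> \<in> V" by (auto simp: sym_nhds_one_def)
      then obtain V' W0 where V': "V' \<subseteq> V" "openin TG W0" "\<one>\<^bsub>G\<^esub> \<in> W0" "W0 \<subseteq> V'"
        and conj: "\<forall>g\<in>carrier G. \<forall>v\<in>V'. g \<otimes>\<^bsub>G\<^esub> v \<otimes>\<^bsub>G\<^esub> inv\<^bsub>G\<^esub> g \<in> V'"
        using sin unfolding SIN_def by meson
      define W where "W = W0 \<inter> {x \<in> topspace TG. inv\<^bsub>G\<^esub> x \<in> W0}"
      have invc: "continuous_map TG TG (\<lambda>a. inv\<^bsub>G\<^esub> a)" using tg topological_group_def by auto
      have Wo: "openin TG W" unfolding W_def
        using openin_continuous_map_preimage[OF invc V'(2)] V'(2) by (intro openin_Int)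
      have W0c: "W0 \<subseteq> carrier G" using openin_subset[OF V'(2)] tsG by simp
      have W: "W \<in> sym_nhds_one G TG"
        unfolding sym_nhds_one_def using Wo V' tsG W_def W0c by auto
      show "\<exists>K W. compactin X K \<and> W \<in> sym_nhds_one G TG \<and> gauge_entourage G E p act K W \<subseteq>
          {(f, h). (gauge_res G act e0 f, gauge_res G act e0 h) \<in> group_entourage G V}"
      proof (intro exI conjI)
        show "compactin X {x0}" using base by simp
        show "W \<in> sym_nhds_one G TG" by fact
        show "gauge_entourage G E p act {x0} W \<subseteq> {(f, h). (gauge_res G act e0 f, gauge_res G act e0 h) \<in> group_entourage G V}"
        proof
          fix fh assume "fh \<in> gauge_entourage G E p act {x0} W"
          then obtain f h where fh: "fh = (f,h)" "f \<in> gauge_group G E p act" "h \<in> gauge_group G E p act"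
            and gw: "bundle_gamma G act (f e0) (h e0) \<in> W"
            unfolding gauge_entourage_def using pt by auto
          have fe: "f e0 \<in> topspace E" "p (f e0) = p e0" using fh(2) pt unfolding gauge_group_def
            using homeomorphic_imp_surjective_map by blast+
          have he: "h e0 \<in> topspace E" "p (h e0) = p e0" using fh(3) pt unfolding gauge_group_def
            using homeomorphic_imp_surjective_map by blast+
          obtain a where a: "a \<in> carrier G" "f e0 = act e0 a" using trans[OF e0S fe] by auto
          obtain b where b: "b \<in> carrier G" "h e0 = act e0 b" using trans[OF e0S he] by auto
          have ra: "gauge_res G act e0 f = a" unfolding gauge_res_def using a gam e0S by simp
          have rb: "gauge_res G act e0 h = b" unfolding gauge_res_def using b gam e0S by simp
          have eq: "act e0 a = act (act e0 b) (inv\<^bsub>G\<^esub> b \<otimes>\<^bsub>G\<^esub> a)"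
            using a2 pt a b by (simp add: G.m_assoc[symmetric])
          have beS: "act e0 b \<in> S" using actin a3 e0S b S_def by auto
          then have "bundle_gamma G act (f e0) (h e0) = inv\<^bsub>G\<^esub> b \<otimes>\<^bsub>G\<^esub> a"
            using gam a b eq by simp
          hence "inv\<^bsub>G\<^esub> b \<otimes>\<^bsub>G\<^esub> a \<in> V'" using gw W_def V' by auto
          hence "b \<otimes>\<^bsub>G\<^esub> (inv\<^bsub>G\<^esub> b \<otimes>\<^bsub>G\<^esub> a) \<otimes>\<^bsub>G\<^esub> inv\<^bsub>G\<^esub> b \<in> V'" using conj b by auto
          hence "a \<otimes>\<^bsub>G\<^esub> inv\<^bsub>G\<^esub> b \<in> V" using V' a b by (auto simp add: G.m_assoc[symmetric])
          then show "fh \<in> {(f, h). (gauge_res G act e0 f, gauge_res G act e0 h) \<in> group_entourage G V}"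
            using fh ra rb a b unfolding group_entourage_def by auto
        qed
      qed
    qed
  qed
  have part2: "path_connected_space TG \<longrightarrow> (\<forall>g\<in>carrier G. \<exists>f\<in>gauge_group G E p act. gauge_res G act e0 f = g)"
  proof (intro impI ballI)
    assume pcs: "path_connected_space TG"
    fix g assume g: "g \<in> carrier G"
    define h0 where "h0 = snd (\<phi> e0)"
    have h0: "h0 \<in> carrier G" using sndc e0S h0_def by simp
    define g' where "g' = h0 \<otimes>\<^bsub>G\<^esub> g \<otimes>\<^bsub>G\<^esub> inv\<^bsub>G\<^esub> h0"
    have g': "g' \<in> carrier G" using h0 g g'_def by simp
    obtain \<gamma> where \<gamma>: "pathin TG \<gamma>" "\<gamma> 0 = \<one>\<^bsub>G\<^esub>" "\<gamma> 1 = g'"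
      using pcs g' tsG unfolding path_connected_space_def by force
    define c where "c = u j x0"
    have c: "c > 0" using j c_def by simp
    define lam where "lam = (\<lambda>x. max 0 (min 1 (2 * u j x / c - 1)))"
    have lamc: "continuous_map X (subtopology euclideanreal {0..1}) lam"
      unfolding continuous_map_in_subtopology lam_def using uc[OF j(1)] c
      by (auto intro!: continuous_intros)
    define \<Gamma> where "\<Gamma> = \<gamma> \<circ> lam"
    have Gc: "continuous_map X TG \<Gamma>" using continuous_map_compose lamc \<gamma>(1) pathin_def \<Gamma>_def by metis
    have Gin: "\<Gamma> x \<in> carrier G" if "x \<in> topspace X" for x
      using continuous_map_image_subset_topspace[OF Gc] tsG that by auto
    have G0: "\<Gamma> x = \<one>\<^bsub>G\<^esub>" if "u j x < c/2" for x
    proof -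
      have "2 * u j x / c < 1" using that c by (simp add: field_simps)
      then have "lam x = 0" unfolding lam_def by simp
      then show ?thesis using \<gamma> \<Gamma>_def by simp
    qed
    have G1: "\<Gamma> x0 = g'"
    proof -
      have "lam x0 = 1" unfolding lam_def using c c_def by simp
      then show ?thesis using \<gamma> \<Gamma>_def by simp
    qed
    define \<psi> where "\<psi> = (\<lambda>e. if p e \<in> U then inv\<^bsub>G\<^esub> (snd (\<phi> e)) \<otimes>\<^bsub>G\<^esub> \<Gamma> (p e) \<otimes>\<^bsub>G\<^esub> snd (\<phi> e) else \<one>\<^bsub>G\<^esub>)"
    have pin: "p e \<in> topspace X" if "e \<in> topspace E" for e
      using continuous_map_image_subset_topspace[OF pc] that by auto
    have psiin: "\<psi> e \<in> carrier G" if "e \<in> topspace E" for e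
      using sndc Gin pin S_def \<psi>_def that by auto
    define T where "T = {e \<in> topspace E. u j (p e) < c/2}"
    have So: "openin E S" unfolding S_def using openin_continuous_map_preimage[OF pc Uo] .
    have To: "openin E T"
    proof -
      have "continuous_map E euclideanreal (u j \<circ> p)"
        using continuous_map_compose[OF pc uc[OF j(1)]] .
      from openin_continuous_map_preimage[OF this, of "{..<c/2}"]
      show ?thesis unfolding T_def by simp
    qed
    have contS: "continuous_map (subtopology E S) TG (\<lambda>e. inv\<^bsub>G\<^esub> (snd (\<phi> e)) \<otimes>\<^bsub>G\<^esub> \<Gamma> (p e) \<otimes>\<^bsub>G\<^esub> snd (\<phi> e))"
    proof -
      have s: "continuous_map (subtopology E S) TG (\<lambda>e. snd (\<phi> e))"
        using continuous_map_compose[OF phic continuous_map_snd] by (simp add: o_def)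
      have q: "continuous_map (subtopology E S) TG (\<lambda>e. \<Gamma> (p e))"
        using continuous_map_compose[OF continuous_map_from_subtopology[OF pc] Gc] by (simp add: o_def)
      show ?thesis by (intro tg_mult_cont[OF tg] tg_inv_cont[OF tg] s q)
    qed
    have psic: "continuous_map E TG \<psi>"
    proof (rule pasting_lemma[where I="{True, False}" and T="\<lambda>b. if b then S else T"
          and f="\<lambda>b. if b then (\<lambda>e. inv\<^bsub>G\<^esub> (snd (\<phi> e)) \<otimes>\<^bsub>G\<^esub> \<Gamma> (p e) \<otimes>\<^bsub>G\<^esub> snd (\<phi> e)) else (\<lambda>e. \<one>\<^bsub>G\<^esub>)"])
      show "openin E (if b then S else T)" if "b \<in> {True, False}" for b
        using So To by simp
      show "continuous_map (subtopology E (if b then S else T)) TG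
         (if b then (\<lambda>e. inv\<^bsub>G\<^esub> (snd (\<phi> e)) \<otimes>\<^bsub>G\<^esub> \<Gamma> (p e) \<otimes>\<^bsub>G\<^esub> snd (\<phi> e)) else (\<lambda>e. \<one>\<^bsub>G\<^esub>))"
        if "b \<in> {True, False}" for b
        using contS tsG by simp
      show "(if b then (\<lambda>e. inv\<^bsub>G\<^esub> (snd (\<phi> e)) \<otimes>\<^bsub>G\<^esub> \<Gamma> (p e) \<otimes>\<^bsub>G\<^esub> snd (\<phi> e)) else (\<lambda>e. \<one>\<^bsub>G\<^esub>)) x =
            (if b' then (\<lambda>e. inv\<^bsub>G\<^esub> (snd (\<phi> e)) \<otimes>\<^bsub>G\<^esub> \<Gamma> (p e) \<otimes>\<^bsub>G\<^esub> snd (\<phi> e)) else (\<lambda>e. \<one>\<^bsub>G\<^esub>)) x"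
        if "b \<in> {True, False}" "b' \<in> {True, False}" "x \<in> topspace E \<inter> (if b then S else T) \<inter> (if b' then S else T)" for b b' x
        using that G0 sndc T_def by auto
      show "\<exists>b. b \<in> {True, False} \<and> x \<in> (if b then S else T) \<and> \<psi> x =
         (if b then (\<lambda>e. inv\<^bsub>G\<^esub> (snd (\<phi> e)) \<otimes>\<^bsub>G\<^esub> \<Gamma> (p e) \<otimes>\<^bsub>G\<^esub> snd (\<phi> e)) else (\<lambda>e. \<one>\<^bsub>G\<^esub>)) x"
        if "x \<in> topspace E" for x
      proof (cases "p x \<in> U")
        case True
        then show ?thesis using that S_def \<psi>_def by (intro exI[of _ True]) auto
      next
        case False
        then have "u j (p x) \<le> 0" using pin[OF that] U_def by auto
        then show ?thesis using that T_def \<psi>_def False c by (intro exI[of _ False]) auto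
      qed
    qed
    have psieq: "\<psi> (act e k) = inv\<^bsub>G\<^esub> k \<otimes>\<^bsub>G\<^esub> \<psi> e \<otimes>\<^bsub>G\<^esub> k" if "e \<in> topspace E" "k \<in> carrier G" for e k
    proof (cases "p e \<in> U")
      case True
      have eS: "e \<in> S" using True that S_def by simp
      have "snd (\<phi> (act e k)) = snd (\<phi> e) \<otimes>\<^bsub>G\<^esub> k" using peq that True by simp
      then show ?thesis using True that a3 sndc[OF eS] Gin[OF pin[OF that(1)]] \<psi>_def
        by (simp add: G.inv_mult_group G.m_assoc)
    next
      case False
      then show ?thesis using that a3 \<psi>_def by simp
    qed
    define chi where "chi = (\<lambda>e. act e (\<psi> e))"
    define chi2 where "chi2 = (\<lambda>e. act e (inv\<^bsub>G\<^esub> (\<psi> e)))"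
    have actc: "continuous_map E E (\<lambda>e. act e (f e))" if "continuous_map E TG f" for f
    proof -
      have "continuous_map E (prod_topology E TG) (\<lambda>e. (e, f e))"
        using that continuous_map_id[unfolded id_def] by (simp add: continuous_map_paired)
      from continuous_map_compose[OF this ac] show ?thesis by (simp add: o_def)
    qed
    have chic: "continuous_map E E chi" unfolding chi_def using actc psic .
    have chic': "continuous_map E E chi2" unfolding chi2_def using actc tg_inv_cont[OF tg psic] .
    have psichi: "\<psi> (chi e) = \<psi> e" if "e \<in> topspace E" for e
      using psieq[OF that psiin[OF that]] psiin[OF that] chi_def by simp
    have psichi': "\<psi> (chi2 e) = \<psi> e" if "e \<in> topspace E" for e
      using psieq[OF that G.inv_closed[OF psiin[OF that]]] psiin[OF that] chi2_def by (simp add: G.m_assoc)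
    have hmc: "homeomorphic_map E E chi"
      unfolding homeomorphic_map_maps homeomorphic_maps_def
    proof (intro exI conjI ballI)
      show "continuous_map E E chi" by fact
      show "continuous_map E E chi2" by fact
      show "chi2 (chi x) = x" if "x \<in> topspace E" for x
        using psichi[OF that] a1 a2 that psiin[OF that] chi_def chi2_def actin by simp
      show "chi (chi2 x) = x" if "x \<in> topspace E" for x
        using psichi'[OF that] a1 a2 that psiin[OF that] chi_def chi2_def actin by simp
    qed
    have "chi \<in> gauge_group G E p act"
      unfolding gauge_group_def
    proof (intro CollectI conjI ballI)
      show "homeomorphic_map E E chi" by fact
      show "chi (act e k) = act (chi e) k" if "e \<in> topspace E" "k \<in> carrier G" for e k
        using psieq[OF that] a2 that psiin[OF that(1)] actin chi_def
        by (simp add: G.m_assoc[symmetric])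
      show "p (chi e) = p e" if "e \<in> topspace E" for e
        using a3 that psiin chi_def by simp
    qed
    moreover have "gauge_res G act e0 chi = g"
    proof -
      have "\<psi> e0 = inv\<^bsub>G\<^esub> h0 \<otimes>\<^bsub>G\<^esub> \<Gamma> x0 \<otimes>\<^bsub>G\<^esub> h0"
        using e0S pt h0_def unfolding S_def \<psi>_def by simp
      also have "\<dots> = inv\<^bsub>G\<^esub> h0 \<otimes>\<^bsub>G\<^esub> (h0 \<otimes>\<^bsub>G\<^esub> g)"
        unfolding G1 g'_def using h0 g by (simp add: G.m_assoc)
      also have "\<dots> = g" using h0 g by (simp add: G.m_assoc[symmetric])
      finally have "\<psi> e0 = g" .
      then show ?thesis unfolding gauge_res_def chi_def using gam[OF e0S] g by simp
    qed
    ultimately show "\<exists>f\<in>gauge_group G E p act. gauge_res G act e0 f = g" by blast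
  qed
  show ?thesis using part1 part2 by blast
qed

end
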